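(* Let $\Delta$ be a finite set and $P$ a shift-invariant probability measure on $\Delta^{\mathbb Z}$. Fix any version $\omega\mapsto P(X_{\mathbb N}\in\cdot\mid X_{-\mathbb N_0})(\omega)$ of the conditional distribution of the future given the past, and call the elements of its image the causal states. Then the process dimension $\dim(P)$ is at most the number of causal states (allowing the value $\infty$); equivalently, $\log\dim(P)$ is bounded above by the topological statistical complexity, the logarithm of the number of causal states.
   Context: $X_k$ is the $k$-th coordinate projection on $\Delta^{\mathbb Z}$, $X_{\mathbb N}=(X_1,X_2,\dots)$ the future and $X_{-\mathbb N_0}=(\dots,X_{-1},X_0)$ the past. $\sigma$ is the left shift on $\Delta^{\mathbb N}$; for $d_1,\dots,d_n\in\Delta$, $[d_1,\dots,d_n]$ is the cylinder set of sequences starting with $d_1,\dots,d_n$, and for a finite signed measure $\mu$ on $\Delta^{\mathbb N}$, $\tau_{d_1\cdots d_n}(\mu)(B)=\mu([d_1,\dots,d_n]\cap\sigma^{-n}(B))$ (empty word: $\tau(\mu)=\mu$). With $P_{\mathbb N}=P\circ X_{\mathbb N}^{-1}$, the canonical OOM vector space is $V_P=\operatorname{span}\{\tau_w(P_{\mathbb N}): w \text{ finite word over }\Delta\}$ and the process dimension is $\dim(P)=\dim(V_P)$. *)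

theory Defs
  imports "HOL-Probability.Probability" "HOL-Library.Function_Algebras"
begin

text \<open>Delta^Z as int => 'd with the product of discrete sigma-algebras; Delta^N
  (indices 1,2,... of the paper) as nat => 'd, where index 0 corresponds to X_1.\<close>

definition MZ :: "(int \<Rightarrow> 'd) measure" where
  "MZ = PiM UNIV (\<lambda>_. count_space UNIV)"

definition MN :: "(nat \<Rightarrow> 'd) measure" where
  "MN = PiM UNIV (\<lambda>_. count_space UNIV)"

definition future :: "(int \<Rightarrow> 'd) \<Rightarrow> (nat \<Rightarrow> 'd)" where
  "future \<omega> = (\<lambda>n. \<omega> (int n + 1))"

definition past :: "(int \<Rightarrow> 'd) \<Rightarrow> (nat \<Rightarrow> 'd)" where
  "past \<omega> = (\<lambda>n. \<omega> (- int n))"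

definition shiftZ :: "(int \<Rightarrow> 'd) \<Rightarrow> (int \<Rightarrow> 'd)" where
  "shiftZ \<omega> = (\<lambda>i. \<omega> (i + 1))"

definition shift_invariant :: "(int \<Rightarrow> 'd) measure \<Rightarrow> bool" where
  "shift_invariant P \<longleftrightarrow> distr P MZ shiftZ = P"

definition cyl :: "'d list \<Rightarrow> (nat \<Rightarrow> 'd) set" where
  "cyl w = {x. \<forall>i<length w. x i = w ! i}"

definition shift_pre :: "nat \<Rightarrow> (nat \<Rightarrow> 'd) set \<Rightarrow> (nat \<Rightarrow> 'd) set" where
  "shift_pre n B = {x. (\<lambda>i. x (i + n)) \<in> B}"

text \<open>Finite signed measures on Delta^N are represented as real-valued set functions
  (zero outside the measurable sets); tau_w(mu)(B) = mu([w] \<inter> sigma^{-n} B).\<close>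
definition tau :: "'d list \<Rightarrow> (nat \<Rightarrow> 'd) measure \<Rightarrow> ((nat \<Rightarrow> 'd) set \<Rightarrow> real)" where
  "tau w \<mu> = (\<lambda>B. if B \<in> sets MN then measure \<mu> (cyl w \<inter> shift_pre (length w) B) else 0)"

definition PN :: "(int \<Rightarrow> 'd) measure \<Rightarrow> (nat \<Rightarrow> 'd) measure" where
  "PN P = distr P MN future"

definition fscale :: "real \<Rightarrow> ('a \<Rightarrow> real) \<Rightarrow> ('a \<Rightarrow> real)" where
  "fscale c f = (\<lambda>x. c * f x)"

definition VP :: "(int \<Rightarrow> 'd) measure \<Rightarrow> ((nat \<Rightarrow> 'd) set \<Rightarrow> real) set" where
  "VP P = module.span fscale (range (\<lambda>w. tau w (PN P)))"

definition proc_dim :: "(int \<Rightarrow> 'd) measure \<Rightarrow> enat" where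
  "proc_dim P = (if \<exists>B. finite B \<and> module.span fscale B = VP P
                 then enat (vector_space.dim fscale (VP P)) else \<infinity>)"

definition cond_dist_version ::
  "(int \<Rightarrow> 'd) measure \<Rightarrow> ((int \<Rightarrow> 'd) \<Rightarrow> (nat \<Rightarrow> 'd) measure) \<Rightarrow> bool" where
  "cond_dist_version P \<kappa> \<longleftrightarrow>
     (\<forall>\<omega>\<in>space P. prob_space (\<kappa> \<omega>) \<and> sets (\<kappa> \<omega>) = sets MN) \<and>
     (\<forall>B\<in>sets MN.
        (\<lambda>\<omega>. measure (\<kappa> \<omega>) B) \<in> borel_measurable (vimage_algebra (space P) past MN) \<and>
        (\<forall>A\<in>sets MN.
           measure P {\<omega>\<in>space P. past \<omega> \<in> A \<and> future \<omega> \<in> B}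
             = (\<integral>\<omega>. indicator {\<omega>\<in>space P. past \<omega> \<in> A} \<omega> * measure (\<kappa> \<omega>) B \<partial>P)))"

definition card_enat :: "'a set \<Rightarrow> enat" where
  "card_enat S = (if finite S then enat (card S) else \<infinity>)"

end

theory Submission
  imports Defs
begin

lemma space_MZ[simp]: "space MZ = UNIV"
  by (simp add: MZ_def space_PiM)
lemma space_MN[simp]: "space MN = UNIV"
  by (simp add: MN_def space_PiM)

lemma compZ: "(\<lambda>\<omega>. \<omega> i) \<in> measurable MZ (count_space UNIV)"
  unfolding MZ_def by (rule measurable_component_singleton) simp
lemma compN: "(\<lambda>\<omega>. \<omega> i) \<in> measurable MN (count_space UNIV)"
  unfolding MN_def by (rule measurable_component_singleton) simp

lemma intoN:
  assumes "\<And>i. (\<lambda>\<omega>. f \<omega> i) \<in> measurable M (count_space UNIV)"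
  shows "f \<in> measurable M MN"
proof -
  have "(\<lambda>\<omega> i. f \<omega> i) \<in> measurable M MN"
    unfolding MN_def by (rule measurable_PiM_single'[where f="\<lambda>i \<omega>. f \<omega> i"]) (auto simp: assms)
  then show ?thesis by simp
qed

lemma intoZ:
  assumes "\<And>i. (\<lambda>\<omega>. f \<omega> i) \<in> measurable M (count_space UNIV)"
  shows "f \<in> measurable M MZ"
proof -
  have "(\<lambda>\<omega> i. f \<omega> i) \<in> measurable M MZ"
    unfolding MZ_def by (rule measurable_PiM_single'[where f="\<lambda>i \<omega>. f \<omega> i"]) (auto simp: assms)
  then show ?thesis by simp
qed

lemma past_meas: "past \<in> measurable MZ MN"
  unfolding past_def by (rule intoN) (rule compZ)
lemma future_meas: "future \<in> measurable MZ MN"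
  unfolding future_def by (rule intoN) (rule compZ)
lemma shiftZ_meas: "shiftZ \<in> measurable MZ MZ"
  unfolding shiftZ_def by (rule intoZ) (rule compZ)
lemma shiftZn_meas: "(\<lambda>\<omega> i. \<omega> (i + int n)) \<in> measurable MZ MZ"
  by (rule intoZ) (rule compZ)
lemma shiftN_meas: "(\<lambda>x i. x (i + n)) \<in> measurable MN MN"
  by (rule intoN) (rule compN)

lemma eq_setN: "{x. x i = c} \<in> sets MN"
proof -
  have "(\<lambda>x. x i) -` {c} \<inter> space MN \<in> sets MN"
    by (rule measurable_sets[OF compN]) simp
  then show ?thesis by (simp add: vimage_def)
qed

lemma all_setN: "{x. \<forall>i<(n::nat). x (h i) = c i} \<in> sets MN"
proof -
  have "{x\<in>space MN. \<forall>i\<in>{..<n}. x (h i) = c i} \<in> sets MN"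
    by (rule sets.sets_Collect_finite_All[where S="{..<n}"]) (simp_all add: eq_setN)
  moreover have "{x\<in>space MN. \<forall>i\<in>{..<n}. x (h i) = c i} = {x. \<forall>i<n. x (h i) = c i}" by auto
  ultimately show ?thesis by simp
qed

lemma cyl_sets: "cyl w \<in> sets MN"
  unfolding cyl_def using all_setN[of "length w" "\<lambda>i. i" "\<lambda>i. w ! i"] by simp

lemma shift_pre_sets: "B \<in> sets MN \<Longrightarrow> shift_pre n B \<in> sets MN"
proof -
  assume "B \<in> sets MN"
  then have "(\<lambda>x i. x (i + n)) -` B \<inter> space MN \<in> sets MN"
    by (rule measurable_sets[OF shiftN_meas])
  then show ?thesis by (simp add: shift_pre_def vimage_def)
qed

lemma fscale_vs: "vector_space fscale"
  by unfold_locales (auto simp: fscale_def fun_eq_iff algebra_simps)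


lemma spaceP: "sets P = sets MZ \<Longrightarrow> space P = UNIV"
  using sets_eq_imp_space_eq[of P MZ] by simp

lemma shift_n:
  assumes sP: "sets P = sets MZ" and inv: "shift_invariant P" and S: "S \<in> sets MZ"
  shows "measure P S = measure P ((\<lambda>\<omega> i. \<omega> (i + int n)) -` S)"
  using S
proof (induction n arbitrary: S)
  case 0
  then show ?case by simp
next
  case (Suc n)
  have inv1: "measure P T = measure P (shiftZ -` T)" if T: "T \<in> sets MZ" for T
  proof -
    have m: "shiftZ \<in> measurable P MZ" using shiftZ_meas measurable_cong_sets[OF sP refl] by blast
    have "measure P T = measure (distr P MZ shiftZ) T" using inv by (simp add: shift_invariant_def)
    also have "\<dots> = measure P (shiftZ -` T \<inter> space P)" by (rule measure_distr[OF m T])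
    finally show ?thesis using spaceP[OF sP] by simp
  qed
  have S': "(\<lambda>\<omega> i. \<omega> (i + int n)) -` S \<in> sets MZ"
    using measurable_sets[OF shiftZn_meas Suc.prems] by simp
  have "measure P S = measure P ((\<lambda>\<omega> i. \<omega> (i + int n)) -` S)" by (rule Suc.IH[OF Suc.prems])
  also have "\<dots> = measure P (shiftZ -` (\<lambda>\<omega> i. \<omega> (i + int n)) -` S)" by (rule inv1[OF S'])
  also have "shiftZ -` (\<lambda>\<omega> i. \<omega> (i + int n)) -` S = (\<lambda>\<omega> i. \<omega> (i + int (Suc n))) -` S"
    by (auto simp: shiftZ_def algebra_simps)
  finally show ?case .
qed

lemma vimage_meas:
  assumes sP: "sets P = sets MZ"
    and f: "f \<in> borel_measurable (vimage_algebra (space P) past MN)"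
  shows "f \<in> borel_measurable P"
proof -
  have pm: "past \<in> measurable P MN" using past_meas measurable_cong_sets[OF sP refl] by blast
  have "sets (vimage_algebra (space P) past MN) \<subseteq> sets P"
    using pm by (subst sets_vimage_algebra2) (auto simp: measurable_def)
  then show ?thesis using f unfolding measurable_def by auto
qed


lemma sum_fun_app: "(\<Sum>k\<in>K. f k) x = (\<Sum>k\<in>K. f k x)"
  by (induction K rule: infinite_finite_induct) auto

theorem mainTheorem2:
  fixes P :: "(int \<Rightarrow> 'd::finite) measure"
    and \<kappa> :: "(int \<Rightarrow> 'd) \<Rightarrow> (nat \<Rightarrow> 'd) measure"
  assumes "prob_space P"
    and "sets P = sets MZ"
    and "shift_invariant P"
    and "cond_dist_version P \<kappa>"
  shows "proc_dim P \<le> card_enat (\<kappa> ` space P)"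
proof (cases "finite (\<kappa> ` space P)")
  case False
  then show ?thesis by (simp add: card_enat_def)
next
  case True
  define K where "K = \<kappa> ` space P"
  have finK: "finite K" using True K_def by simp
  note sP = assms(2)
  have spP: "space P = UNIV" using spaceP[OF sP] .
  interpret P: prob_space P by (rule assms(1))
  interpret vs: vector_space fscale by (rule fscale_vs)
  have cd1: "\<And>\<omega>. prob_space (\<kappa> \<omega>) \<and> sets (\<kappa> \<omega>) = sets MN"
    using assms(4) spP unfolding cond_dist_version_def by auto
  have cdm: "\<And>B. B \<in> sets MN \<Longrightarrow> (\<lambda>\<omega>. measure (\<kappa> \<omega>) B) \<in> borel_measurable P"
    using assms(4) vimage_meas[OF sP] unfolding cond_dist_version_def by auto
  have cdi: "\<And>A B. A \<in> sets MN \<Longrightarrow> B \<in> sets MN \<Longrightarrow>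
     measure P {\<omega>. past \<omega> \<in> A \<and> future \<omega> \<in> B}
             = (\<integral>\<omega>. indicator {\<omega>. past \<omega> \<in> A} \<omega> * measure (\<kappa> \<omega>) B \<partial>P)"
    using assms(4) spP unfolding cond_dist_version_def by auto
  have Kall: "\<And>\<omega>. \<kappa> \<omega> \<in> K" using K_def spP by auto
  have Kprop: "\<And>k. k \<in> K \<Longrightarrow> prob_space k \<and> sets k = sets MN" using cd1 K_def by auto
  define E where "E k = {\<omega>. \<kappa> \<omega> = k}" for k
  have Emeas: "E k \<in> sets P" if kK: "k \<in> K" for k
  proof -
    have sep: "\<exists>B\<in>sets MN. measure k' B \<noteq> measure k B" if "k' \<in> K - {k}" for k'
    proof (rule ccontr)
      assume "\<not> ?thesis"
      then have eq: "\<And>B. B \<in> sets MN \<Longrightarrow> measure k' B = measure k B" by auto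
      have pk: "prob_space k" "sets k = sets MN" using Kprop kK by auto
      have pk': "prob_space k'" "sets k' = sets MN" using Kprop that by auto
      have "k' = k"
      proof (rule measure_eqI)
        show "sets k' = sets k" using pk pk' by simp
        fix A assume "A \<in> sets k'"
        then show "emeasure k' A = emeasure k A"
          using eq pk pk' by (metis prob_space.finite_measure finite_measure.emeasure_eq_measure)
      qed
      then show False using that by simp
    qed
    then obtain Bs where Bs: "\<And>k'. k' \<in> K - {k} \<Longrightarrow> Bs k' \<in> sets MN \<and> measure k' (Bs k') \<noteq> measure k (Bs k')"
      by metis
    have "E k = {\<omega>\<in>space P. \<forall>k'\<in>K - {k}. measure (\<kappa> \<omega>) (Bs k') = measure k (Bs k')}"
      unfolding E_def spP using Bs Kall by auto
    also have "\<dots> \<in> sets P"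
    proof (rule sets.sets_Collect_finite_All)
      fix k' assume k': "k' \<in> K - {k}"
      have fm: "(\<lambda>\<omega>. measure (\<kappa> \<omega>) (Bs k')) \<in> borel_measurable P" using cdm Bs[OF k'] by auto
      have "(\<lambda>\<omega>. measure (\<kappa> \<omega>) (Bs k')) -` {measure k (Bs k')} \<inter> space P \<in> sets P"
        by (rule measurable_sets[OF fm]) simp
      moreover have "(\<lambda>\<omega>. measure (\<kappa> \<omega>) (Bs k')) -` {measure k (Bs k')} \<inter> space P
          = {\<omega>\<in>space P. measure (\<kappa> \<omega>) (Bs k') = measure k (Bs k')}" by auto
      ultimately show "{\<omega>\<in>space P. measure (\<kappa> \<omega>) (Bs k') = measure k (Bs k')} \<in> sets P" by simp
    next
      show "finite (K - {k})" using finK by simp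
    qed
    finally show ?thesis .
  qed
  define g where "g k = (\<lambda>B. if B \<in> sets MN then measure k B else 0)" for k :: "(nat \<Rightarrow> 'd) measure"
  have pm: "past \<in> measurable P MN" using past_meas measurable_cong_sets[OF sP refl] by blast
  have fm: "future \<in> measurable P MN" using future_meas measurable_cong_sets[OF sP refl] by blast
  have key: "tau w (PN P) \<in> vs.span (g ` K)" for w
  proof -
    define n where "n = length w"
    define Aw where "Aw = {x::nat\<Rightarrow>'d. \<forall>i<n. x (n - 1 - i) = w ! i}"
    have Aw: "Aw \<in> sets MN" unfolding Aw_def by (rule all_setN)
    define Sa where "Sa = {\<omega>. past \<omega> \<in> Aw}"
    have Sa: "Sa \<in> sets P"
      using measurable_sets[OF pm Aw] spP by (simp add: Sa_def vimage_def)
    define c where "c k = measure P (Sa \<inter> E k)" for k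
    have val: "tau w (PN P) B = (\<Sum>k\<in>K. c k * measure k B)" if B: "B \<in> sets MN" for B
    proof -
      define S where "S = {\<omega>. past \<omega> \<in> Aw \<and> future \<omega> \<in> B}"
      have S: "S \<in> sets MZ"
      proof -
        have "past -` Aw \<inter> space P \<in> sets P" by (rule measurable_sets[OF pm Aw])
        moreover have "future -` B \<inter> space P \<in> sets P" by (rule measurable_sets[OF fm B])
        ultimately have "(past -` Aw \<inter> space P) \<inter> (future -` B \<inter> space P) \<in> sets P" by auto
        then show ?thesis using sP spP by (simp add: S_def vimage_def Collect_conj_eq)
      qed
      have CB: "cyl w \<inter> shift_pre n B \<in> sets MN" using cyl_sets shift_pre_sets[OF B] by auto
      have "tau w (PN P) B = measure (PN P) (cyl w \<inter> shift_pre n B)"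
        using B by (simp add: tau_def n_def)
      also have "\<dots> = measure P (future -` (cyl w \<inter> shift_pre n B) \<inter> space P)"
        unfolding PN_def by (rule measure_distr[OF fm CB])
      also have "future -` (cyl w \<inter> shift_pre n B) \<inter> space P = (\<lambda>\<omega> i. \<omega> (i + int n)) -` S"
      proof -
        have e1: "(\<forall>i<n. \<omega> (- int (n - 1 - i) + int n) = w ! i) \<longleftrightarrow> (\<forall>i<n. \<omega> (int i + 1) = w ! i)" for \<omega> :: "int \<Rightarrow> 'd"
        proof -
          have "\<And>i. i < n \<Longrightarrow> - int (n - 1 - i) + int n = int i + 1" by (simp add: of_nat_diff)
          then show ?thesis by (auto simp: add.commute)
        qed
        have e2: "(\<lambda>i. \<omega> (int (i + n) + 1)) = (\<lambda>i. \<omega> (int i + 1 + int n))" for \<omega> :: "int \<Rightarrow> 'd"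
          by (simp add: algebra_simps)
        show ?thesis
          unfolding spP S_def Aw_def past_def future_def cyl_def shift_pre_def n_def[symmetric]
          using e1 e2 by (auto simp: algebra_simps)
      qed
      also have "measure P ((\<lambda>\<omega> i. \<omega> (i + int n)) -` S) = measure P S"
        by (rule shift_n[OF sP assms(3) S, symmetric])
      also have "\<dots> = (\<integral>\<omega>. indicator Sa \<omega> * measure (\<kappa> \<omega>) B \<partial>P)"
        unfolding S_def Sa_def by (rule cdi[OF Aw B])
      also have "\<dots> = (\<integral>\<omega>. (\<Sum>k\<in>K. indicator (Sa \<inter> E k) \<omega> * measure k B) \<partial>P)"
      proof (rule Bochner_Integration.integral_cong[OF refl])
        fix \<omega>
        have "(\<Sum>k\<in>K. indicator (Sa \<inter> E k) \<omega> * measure k B)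
            = (\<Sum>k\<in>K. if k = \<kappa> \<omega> then indicator Sa \<omega> * measure k B else 0)"
          by (rule sum.cong) (auto simp: E_def indicator_def)
        also have "\<dots> = indicator Sa \<omega> * measure (\<kappa> \<omega>) B"
          using finK Kall by (simp add: sum.delta')
        finally show "indicator Sa \<omega> * measure (\<kappa> \<omega>) B = (\<Sum>k\<in>K. indicator (Sa \<inter> E k) \<omega> * measure k B)" ..
      qed
      also have "\<dots> = (\<Sum>k\<in>K. (\<integral>\<omega>. indicator (Sa \<inter> E k) \<omega> * measure k B \<partial>P))"
      proof (rule Bochner_Integration.integral_sum)
        fix k assume "k \<in> K"
        then have "Sa \<inter> E k \<in> sets P" using Sa Emeas by auto
        then show "integrable P (\<lambda>\<omega>. indicator (Sa \<inter> E k) \<omega> * measure k B)"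
          by (intro integrable_mult_left integrable_real_indicator) (auto simp: P.emeasure_eq_measure)
      qed
      also have "\<dots> = (\<Sum>k\<in>K. c k * measure k B)"
      proof (rule sum.cong[OF refl])
        fix k assume "k \<in> K"
        then have "Sa \<inter> E k \<in> sets P" using Sa Emeas by auto
        then show "(\<integral>\<omega>. indicator (Sa \<inter> E k) \<omega> * measure k B \<partial>P) = c k * measure k B"
          by (simp add: c_def P.emeasure_eq_measure)
      qed
      finally show ?thesis .
    qed
    have "tau w (PN P) = (\<Sum>k\<in>K. fscale (c k) (g k))"
    proof
      fix B
      show "tau w (PN P) B = (\<Sum>k\<in>K. fscale (c k) (g k)) B"
      proof (cases "B \<in> sets MN")
        case True
        then show ?thesis by (simp add: sum_fun_app fscale_def g_def val)
      next
        case False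
        then show ?thesis by (simp add: sum_fun_app fscale_def g_def tau_def)
      qed
    qed
    also have "\<dots> \<in> vs.span (g ` K)"
      by (intro vs.span_sum vs.span_scale vs.span_base) auto
    finally show ?thesis .
  qed
  have sub: "VP P \<subseteq> vs.span (g ` K)"
    unfolding VP_def by (rule vs.span_minimal) (use key in auto)
  obtain Bb where Bb: "Bb \<subseteq> VP P" "vs.independent Bb" "VP P \<subseteq> vs.span Bb" "card Bb = vs.dim (VP P)"
    by (rule vs.basis_exists)
  have fin: "finite Bb \<and> card Bb \<le> card (g ` K)"
    by (rule vs.independent_span_bound) (use finK Bb sub in auto)
  have spanB: "vs.span Bb = VP P"
  proof
    have "vs.span Bb \<subseteq> vs.span (VP P)" by (rule vs.span_mono[OF Bb(1)])
    also have "\<dots> = VP P" unfolding VP_def by (rule vs.span_span)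
    finally show "vs.span Bb \<subseteq> VP P" .
  qed (rule Bb(3))
  have "proc_dim P = enat (card Bb)"
    unfolding proc_dim_def using fin spanB Bb(4) by auto
  also have "\<dots> \<le> enat (card K)" using fin card_image_le[OF finK, of g] by simp
  finally show ?thesis using finK by (simp add: card_enat_def K_def)
qed

end
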